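(* In the adversarial edge arrival model for fractional matchings, no online algorithm achieves a guarantee larger than $0.58884$ on bipartite graphs of maximum degree four. In particular, since $0.58884 < \frac{4}{9-\sqrt5}$, the guarantee $\frac{4}{9-\sqrt5}$ is not achievable on graphs of maximum degree four.
   Context: Adversarial edge arrival model for fractional matchings: edges arrive one at a time in an adversarial order; on arrival of $e$ the algorithm irrevocably assigns $y_e\ge0$ so that for every vertex $w$, $\sum_{f\in\delta(w)}y_f\le 1$ at all times. An algorithm achieves guarantee $\gamma$ if at every timepoint $\sum_e y_e\ge\gamma\,\nu(G_t)$, where $\nu(G_t)$ is the maximum matching cardinality of the graph of arrived edges. *)

theory Defs
  imports Complex_Main
begin

text \<open>Vertices are natural numbers (an unbounded supply, so the adversary may
introduce fresh vertices). An edge is a two-element vertex set.\<close>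

type_synonym edge = "nat set"

definition is_matching :: "edge set \<Rightarrow> bool" where
  "is_matching M \<longleftrightarrow> (\<forall>e\<in>M. \<forall>f\<in>M. e \<noteq> f \<longrightarrow> e \<inter> f = {})"

definition matching_number :: "edge set \<Rightarrow> nat" where
  "matching_number E = Max {card M | M. M \<subseteq> E \<and> is_matching M}"

definition bipartite :: "edge set \<Rightarrow> bool" where
  "bipartite E \<longleftrightarrow> (\<exists>A. \<forall>e\<in>E. card (e \<inter> A) = 1)"

definition max_degree_le :: "edge set \<Rightarrow> nat \<Rightarrow> bool" where
  "max_degree_le E d \<longleftrightarrow> (\<forall>v. card {e\<in>E. v \<in> e} \<le> d)"

definition admissible_seq :: "edge list \<Rightarrow> bool" where
  "admissible_seq es \<longleftrightarrow> distinct es \<and> (\<forall>e\<in>set es. card e = 2)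
     \<and> bipartite (set es) \<and> max_degree_le (set es) 4"

text \<open>A deterministic online algorithm is a function alg: on the arrival
of the last edge of the current sequence es, it irrevocably assigns the
value alg es to that edge; this value depends only on the edges arrived
so far.\<close>
definition alg_val :: "(edge list \<Rightarrow> real) \<Rightarrow> edge list \<Rightarrow> nat \<Rightarrow> real" where
  "alg_val alg es i = alg (take (Suc i) es)"

text \<open>Feasibility: nonnegative values and every vertex load at most 1
(on all admissible sequences, hence at all times since prefixes are admissible).\<close>
definition feasible_online :: "(edge list \<Rightarrow> real) \<Rightarrow> bool" where
  "feasible_online alg \<longleftrightarrow> (\<forall>es. admissible_seq es \<longrightarrow>
      (\<forall>i<length es. alg_val alg es i \<ge> 0) \<and>
      (\<forall>w. (\<Sum>i | i < length es \<and> w \<in> es ! i. alg_val alg es i) \<le> 1))"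

definition achieves_guarantee :: "(edge list \<Rightarrow> real) \<Rightarrow> real \<Rightarrow> bool" where
  "achieves_guarantee alg \<gamma> \<longleftrightarrow> (\<forall>es. admissible_seq es \<longrightarrow>
      (\<Sum>i<length es. alg_val alg es i) \<ge> \<gamma> * real (matching_number (set es)))"

end

theory Submission
  imports Defs
begin

lemma deg_check:
  assumes "\<forall>e\<in>set es. e \<subseteq> set vs" "\<forall>v\<in>set vs. length (filter (\<lambda>e. v \<in> e) es) \<le> d"
  shows "max_degree_le (set es) d"
  unfolding max_degree_le_def
proof
  fix v
  have "card {e\<in>set es. v\<in>e} = card (set (filter (\<lambda>e. v \<in> e) es))" by simp
  also have "\<dots> \<le> length (filter (\<lambda>e. v \<in> e) es)" by (rule card_length)
  also have "\<dots> \<le> d"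
  proof (cases "v \<in> set vs")
    case True then show ?thesis using assms(2) by blast
  next
    case False
    then have "filter (\<lambda>e. v \<in> e) es = []" using assms(1) by (auto simp: filter_empty_conv)
    then show ?thesis by simp
  qed
  finally show "card {e\<in>set es. v\<in>e} \<le> d" .
qed

fun psum :: "(edge list \<Rightarrow> real) \<Rightarrow> edge list \<Rightarrow> edge list \<Rightarrow> real" where
  "psum alg pre [] = 0"
| "psum alg pre (e#es) = alg (pre @ [e]) + psum alg (pre @ [e]) es"

fun lsum :: "(edge list \<Rightarrow> real) \<Rightarrow> nat \<Rightarrow> edge list \<Rightarrow> edge list \<Rightarrow> real" where
  "lsum alg w pre [] = 0"
| "lsum alg w pre (e#es) = (if w \<in> e then alg (pre @ [e]) else 0) + lsum alg w (pre @ [e]) es"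

lemma psum_eq: "(\<Sum>i<length es. alg (pre @ take (Suc i) es)) = psum alg pre es"
proof (induction es arbitrary: pre)
  case Nil then show ?case by simp
next
  case (Cons e es)
  have "(\<Sum>i<length (e#es). alg (pre @ take (Suc i) (e#es)))
      = alg (pre @ take (Suc 0) (e#es)) + (\<Sum>i<length es. alg (pre @ take (Suc (Suc i)) (e#es)))"
    by (simp only: length_Cons sum.lessThan_Suc_shift)
  then show ?case using Cons.IH[of "pre @ [e]"] by simp
qed

lemma lsum_eq: "(\<Sum>i<length es. if w \<in> es ! i then alg (pre @ take (Suc i) es) else 0) = lsum alg w pre es"
proof (induction es arbitrary: pre)
  case Nil then show ?case by simp
next
  case (Cons e es)
  have "(\<Sum>i<length (e#es). if w \<in> (e#es) ! i then alg (pre @ take (Suc i) (e#es)) else 0)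
      = (if w \<in> (e#es) ! 0 then alg (pre @ take (Suc 0) (e#es)) else 0) + (\<Sum>i<length es. if w \<in> (e#es) ! (Suc i) then alg (pre @ take (Suc (Suc i)) (e#es)) else 0)"
    by (simp only: length_Cons sum.lessThan_Suc_shift)
  also have "\<dots> = (if w \<in> e then alg (pre @ [e]) else 0) + (\<Sum>i<length es. if w \<in> es ! i then alg ((pre @ [e]) @ take (Suc i) es) else 0)"
    by (intro arg_cong2[where f="(+)"] sum.cong) auto
  finally show ?case using Cons.IH[of "pre @ [e]"] by simp
qed

lemma load_le:
  assumes "feasible_online alg" "admissible_seq es"
  shows "lsum alg w [] es \<le> 1"
proof -
  have "(\<Sum>i | i < length es \<and> w \<in> es ! i. alg_val alg es i) \<le> 1"
    using assms unfolding feasible_online_def by blast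
  moreover have "(\<Sum>i | i < length es \<and> w \<in> es ! i. alg_val alg es i)
     = (\<Sum>i<length es. if w \<in> es ! i then alg_val alg es i else 0)"
  proof -
    have "{i. i < length es \<and> w \<in> es ! i} = {i \<in> {..<length es}. w \<in> es ! i}" by auto
    then show ?thesis by (simp only: sum.inter_filter[OF finite_lessThan])
  qed
  moreover have "(\<Sum>i<length es. if w \<in> es ! i then alg_val alg es i else 0) = lsum alg w [] es"
    unfolding alg_val_def using lsum_eq[where es=es and w=w and alg=alg and pre="[]"] by (simp only: append_Nil)
  ultimately show ?thesis by simp
qed

lemma mn_ge:
  assumes "finite E" "M \<subseteq> E" "is_matching M"
  shows "card M \<le> matching_number E"
proof -
  have "finite {card M | M. M \<subseteq> E \<and> is_matching M}"
    using assms(1) by simp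
  then show ?thesis unfolding matching_number_def
    using assms by (intro Max_ge) auto
qed

lemma ratio_ge:
  assumes "achieves_guarantee alg g" "admissible_seq es" "0 \<le> g"
    "M \<subseteq> set es" "is_matching M" "card M = k"
  shows "g * k \<le> psum alg [] es"
proof -
  have A: "g * matching_number (set es) \<le> (\<Sum>i<length es. alg_val alg es i)"
    using assms unfolding achieves_guarantee_def by blast
  moreover have B: "(\<Sum>i<length es. alg_val alg es i) = psum alg [] es"
    unfolding alg_val_def using psum_eq[where es=es and alg=alg and pre="[]"] by (simp only: append_Nil)
  moreover have "k \<le> matching_number (set es)" using mn_ge[of "set es" M] assms by simp
  ultimately show ?thesis using assms(3)
  proof -
    have "g * real k \<le> g * real (matching_number (set es))"
      using assms(3) \<open>k \<le> matching_number (set es)\<close> by (simp add: mult_left_mono)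
    then show ?thesis using A B by linarith
  qed
qed


lemma adm_intro:
  assumes "distinct es" "\<forall>e\<in>set es. card e = 2" "\<forall>e\<in>set es. card (e \<inter> A) = 1"
    "\<forall>e\<in>set es. e \<subseteq> set vs" "\<forall>v\<in>set vs. length (filter (\<lambda>e. v \<in> e) es) \<le> 4"
  shows "admissible_seq es"
  unfolding admissible_seq_def bipartite_def using assms deg_check[of es vs 4] by blast

definition "vs12 = [0,1,2,3,4,5,6,7,8,9,10,11::nat]"

definition "sA = [{0,1::nat}]"
definition "sB = [{0,1},{0,2},{1,3::nat}]"
definition "sC = [{0,1},{0,2},{1,3},{2,3},{1,4},{0,5::nat}]"
definition "sD = [{0,1},{0,2},{1,3},{2,3},{3,4},{2,5},{1,6},{0,7::nat}]"
definition "sE = [{0,1},{0,2},{1,3},{2,3},{3,4},{2,5},{4,5},{0,6},{1,7},{2,8},{3,9::nat}]"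
definition "sF = [{0,1},{0,2},{1,3},{2,3},{3,4},{2,5},{4,5},{0,6},{1,7},{2,8},{3,9},{4,10},{5,11::nat}]"

lemma admA: "admissible_seq sA"
  by (rule adm_intro[where A="{0}" and vs=vs12]) (simp_all add: sA_def vs12_def doubleton_eq_iff)
lemma admB: "admissible_seq sB"
  by (rule adm_intro[where A="{0,3}" and vs=vs12]) (simp_all add: sB_def vs12_def doubleton_eq_iff)
lemma admC: "admissible_seq sC"
  by (rule adm_intro[where A="{0,3,4}" and vs=vs12]) (simp_all add: sC_def vs12_def doubleton_eq_iff)
lemma admD: "admissible_seq sD"
  by (rule adm_intro[where A="{0,3,5,6}" and vs=vs12]) (simp_all add: sD_def vs12_def doubleton_eq_iff)
lemma admE: "admissible_seq sE"
  by (rule adm_intro[where A="{0,3,5,7,8}" and vs=vs12]) (simp_all add: sE_def vs12_def doubleton_eq_iff)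
lemma admF: "admissible_seq sF"
  by (rule adm_intro[where A="{0,3,5,7,8,10}" and vs=vs12]) (simp_all add: sF_def vs12_def doubleton_eq_iff)

lemma mA1: "{{0,1}} \<subseteq> set sA"
  by (simp add: sA_def is_matching_def)
lemma mA2: "is_matching {{0,1}}"
  by (simp add: sA_def is_matching_def)
lemma mA3: "card ({{0,1}} :: nat set set) = 1"
  by (simp add: sA_def is_matching_def)
lemma mB1: "{{0,2},{1,3}} \<subseteq> set sB"
  by (auto simp add: sB_def is_matching_def doubleton_eq_iff)
lemma mB2: "is_matching {{0,2},{1,3}}"
  by (auto simp add: sB_def is_matching_def doubleton_eq_iff)
lemma mB3: "card ({{0,2},{1,3}} :: nat set set) = 2"
  by (auto simp add: sB_def is_matching_def doubleton_eq_iff)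
lemma mC1: "{{0,5},{1,4},{2,3}} \<subseteq> set sC"
  by (auto simp add: sC_def is_matching_def doubleton_eq_iff)
lemma mC2: "is_matching {{0,5},{1,4},{2,3}}"
  by (auto simp add: sC_def is_matching_def doubleton_eq_iff)
lemma mC3: "card ({{0,5},{1,4},{2,3}} :: nat set set) = 3"
  by (auto simp add: sC_def is_matching_def doubleton_eq_iff)
lemma mD1: "{{0,7},{1,6},{2,5},{3,4}} \<subseteq> set sD"
  by (auto simp add: sD_def is_matching_def doubleton_eq_iff)
lemma mD2: "is_matching {{0,7},{1,6},{2,5},{3,4}}"
  by (auto simp add: sD_def is_matching_def doubleton_eq_iff)
lemma mD3: "card ({{0,7},{1,6},{2,5},{3,4}} :: nat set set) = 4"
  by (auto simp add: sD_def is_matching_def doubleton_eq_iff)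
lemma mE1: "{{0,6},{1,7},{2,8},{3,9},{4,5}} \<subseteq> set sE"
  by (auto simp add: sE_def is_matching_def doubleton_eq_iff)
lemma mE2: "is_matching {{0,6},{1,7},{2,8},{3,9},{4,5}}"
  by (auto simp add: sE_def is_matching_def doubleton_eq_iff)
lemma mE3: "card ({{0,6},{1,7},{2,8},{3,9},{4,5}} :: nat set set) = 5"
  by (auto simp add: sE_def is_matching_def doubleton_eq_iff)
lemma mF1: "{{0,6},{1,7},{2,8},{3,9},{4,10},{5,11}} \<subseteq> set sF"
  by (auto simp add: sF_def is_matching_def doubleton_eq_iff)
lemma mF2: "is_matching {{0,6},{1,7},{2,8},{3,9},{4,10},{5,11}}"
  by (auto simp add: sF_def is_matching_def doubleton_eq_iff)
lemma mF3: "card ({{0,6},{1,7},{2,8},{3,9},{4,10},{5,11}} :: nat set set) = 6"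
  by (auto simp add: sF_def is_matching_def doubleton_eq_iff)

lemma bound712:
  assumes f: "feasible_online alg" and g: "achieves_guarantee alg \<gamma>" and g0: "0 \<le> \<gamma>"
  shows "\<gamma> \<le> 7/12"
proof -
  have rA: "\<gamma> * real 1 \<le> psum alg [] sA" by (rule ratio_ge[OF g admA g0 mA1 mA2 mA3])
  have rB: "\<gamma> * real 2 \<le> psum alg [] sB" by (rule ratio_ge[OF g admB g0 mB1 mB2 mB3])
  have rC: "\<gamma> * real 3 \<le> psum alg [] sC" by (rule ratio_ge[OF g admC g0 mC1 mC2 mC3])
  have rD: "\<gamma> * real 4 \<le> psum alg [] sD" by (rule ratio_ge[OF g admD g0 mD1 mD2 mD3])
  have rE: "\<gamma> * real 5 \<le> psum alg [] sE" by (rule ratio_ge[OF g admE g0 mE1 mE2 mE3])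
  have rF: "\<gamma> * real 6 \<le> psum alg [] sF" by (rule ratio_ge[OF g admF g0 mF1 mF2 mF3])
  have lC0: "lsum alg 0 [] sC \<le> 1" by (rule load_le[OF f admC])
  have lC1: "lsum alg 1 [] sC \<le> 1" by (rule load_le[OF f admC])
  have lD0: "lsum alg 0 [] sD \<le> 1" by (rule load_le[OF f admD])
  have lD1: "lsum alg 1 [] sD \<le> 1" by (rule load_le[OF f admD])
  have lE0: "lsum alg 0 [] sE \<le> 1" by (rule load_le[OF f admE])
  have lE1: "lsum alg 1 [] sE \<le> 1" by (rule load_le[OF f admE])
  have lE2: "lsum alg 2 [] sE \<le> 1" by (rule load_le[OF f admE])
  have lE3: "lsum alg 3 [] sE \<le> 1" by (rule load_le[OF f admE])
  have lF0: "lsum alg 0 [] sF \<le> 1" by (rule load_le[OF f admF])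
  have lF1: "lsum alg 1 [] sF \<le> 1" by (rule load_le[OF f admF])
  have lF2: "lsum alg 2 [] sF \<le> 1" by (rule load_le[OF f admF])
  have lF3: "lsum alg 3 [] sF \<le> 1" by (rule load_le[OF f admF])
  have lF4: "lsum alg 4 [] sF \<le> 1" by (rule load_le[OF f admF])
  have lF5: "lsum alg 5 [] sF \<le> 1" by (rule load_le[OF f admF])
  note all = rA rB rC rD rE rF lC0 lC1 lD0 lD1 lE0 lE1 lE2 lE3 lF0 lF1 lF2 lF3 lF4 lF5
  have eq: "2 * psum alg [] sA + 2 * psum alg [] sB + psum alg [] sC + psum alg [] sD + psum alg [] sE + psum alg [] sF
    = lsum alg 0 [] sC + lsum alg 1 [] sC + lsum alg 0 [] sD + lsum alg 1 [] sD
      + lsum alg 0 [] sE + lsum alg 1 [] sE + lsum alg 2 [] sE + lsum alg 3 [] sE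
      + lsum alg 0 [] sF + lsum alg 1 [] sF + lsum alg 2 [] sF + lsum alg 3 [] sF + lsum alg 4 [] sF + lsum alg 5 [] sF"
    by (simp add: sA_def sB_def sC_def sD_def sE_def sF_def algebra_simps)
  show ?thesis using all eq by (simp only: of_nat_1 of_nat_numeral mult_1_right)
qed

theorem mainTheorem3:
  fixes alg :: "edge list \<Rightarrow> real" and \<gamma> :: real
  assumes "feasible_online alg"
    and "achieves_guarantee alg \<gamma>"
  shows "\<gamma> \<le> 0.58884 \<and> \<gamma> < 4 / (9 - sqrt 5)"
proof -
  have b: "\<gamma> \<le> 7/12"
  proof (cases "0 \<le> \<gamma>")
    case True then show ?thesis using bound712[OF assms] by blast
  next
    case False then show ?thesis by simp
  qed
  have s: "2.2 < sqrt 5" by (rule real_less_rsqrt) (simp add: power2_eq_square)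
  have "sqrt (3^2) = (3::real)" by simp
  then have t: "sqrt 5 < (3::real)" using real_sqrt_less_mono[of 5 "3^2"] by simp
  have "7/12 < 4 / (9 - sqrt (5::real))"
    using s t by (simp add: pos_less_divide_eq)
  then show ?thesis using b by simp
qed

end
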